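(* Let $X$ and $Y$ be locally compact Hausdorff spaces, $p:X\to Y$ a perfect irreducible map, $f:X'\to X$ and $g:Y'\to Y$ continuous maps of topological spaces, and $p':X'\to Y'$ a closed irreducible map with $p\circ f=g\circ p'$. Then every $G\in\mathrm{RC}(X)$ satisfies $$\mathrm{cl}(g^{-1}(\mathrm{int}(p(G))))=\bigvee\{p'(\mathrm{cl}(f^{-1}(\mathrm{int}(H))))\mid H\in\mathrm{CR}(X),\ p(H)\subseteq\mathrm{int}(p(G))\},$$ the join being taken in the Boolean algebra $\mathrm{RC}(Y')$.
   Context: For a space $X$, $\mathrm{RC}(X)$ is the complete Boolean algebra of regular closed sets ($F=\mathrm{cl}(\mathrm{int}F)$), in which $\bigvee_i F_i=\mathrm{cl}(\bigcup_i F_i)$; $\mathrm{CR}(X)$ is the set of compact regular closed subsets. A perfect map is a continuous closed map with compact fibres; an irreducible map is a continuous surjection such that no proper closed subset of the domain is mapped onto the codomain. *)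

theory Defs
  imports "HOL-Analysis.Analysis"
begin

definition irreducible_map :: "'a topology \<Rightarrow> 'b topology \<Rightarrow> ('a \<Rightarrow> 'b) \<Rightarrow> bool" where
  "irreducible_map X Y f \<longleftrightarrow>
     continuous_map X Y f \<and> f ` topspace X = topspace Y \<and>
     (\<forall>C. closedin X C \<and> C \<noteq> topspace X \<longrightarrow> f ` C \<noteq> topspace Y)"

definition regular_closed_in :: "'a topology \<Rightarrow> 'a set \<Rightarrow> bool" where
  "regular_closed_in X F \<longleftrightarrow> X closure_of (X interior_of F) = F"

definition compact_regular_closed_in :: "'a topology \<Rightarrow> 'a set \<Rightarrow> bool" where
  "compact_regular_closed_in X H \<longleftrightarrow> regular_closed_in X H \<and> compactin X H"

end

theory Submission
  imports Defs
begin

theorem lemma4p6: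
  fixes X :: "'a topology" and Y :: "'b topology"
    and X' :: "'c topology" and Y' :: "'d topology"
    and p :: "'a \<Rightarrow> 'b" and f :: "'c \<Rightarrow> 'a" and g :: "'d \<Rightarrow> 'b" and p' :: "'c \<Rightarrow> 'd"
  assumes "locally_compact_space X" and "Hausdorff_space X"
    and "locally_compact_space Y" and "Hausdorff_space Y"
    and "perfect_map X Y p" and "irreducible_map X Y p"
    and "continuous_map X' X f" and "continuous_map Y' Y g"
    and "closed_map X' Y' p'" and "irreducible_map X' Y' p'"
    and "\<forall>x \<in> topspace X'. p (f x) = g (p' x)"
    and "regular_closed_in X G"
  shows "Y' closure_of {y \<in> topspace Y'. g y \<in> Y interior_of (p ` G)} =
         Y' closure_of (\<Union> {p' ` (X' closure_of {x \<in> topspace X'. f x \<in> X interior_of H}) | H.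
                              compact_regular_closed_in X H \<and> p ` H \<subseteq> Y interior_of (p ` G)})"
proof -
  define U where "U = Y interior_of (p ` G)"
  have cp: "continuous_map X Y p" using assms(5) unfolding perfect_map_def by blast
  have cp': "continuous_map X' Y' p'" and sp': "p' ` topspace X' = topspace Y'"
    using assms(10) unfolding irreducible_map_def by blast+
  have Uo: "openin Y U" unfolding U_def by simp
  have reg: "regular_space X"
    using assms(1,2) locally_compact_Hausdorff_imp_regular_space by blast
  have nb: "neighbourhood_base_of (\<lambda>C. compactin X C \<and> closedin X C) X"
    using assms(1) reg locally_compact_regular_space_neighbourhood_base by blast
  have "{y \<in> topspace Y'. g y \<in> U} =
     \<Union> {p' ` (X' closure_of {x \<in> topspace X'. f x \<in> X interior_of H}) | H.
                              compact_regular_closed_in X H \<and> p ` H \<subseteq> U}" (is "?L = ?R")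
  proof
    show "?L \<subseteq> ?R"
    proof
      fix y assume y: "y \<in> ?L"
      then obtain x0 where x0: "x0 \<in> topspace X'" "y = p' x0" using sp' by force
      have fx0: "f x0 \<in> topspace X" using x0 assms(7) by (meson continuous_map_def funcset_mem)
      have "p (f x0) \<in> U" using y x0 assms(11) by auto
      hence "f x0 \<in> {z \<in> topspace X. p z \<in> U}" using fx0 by simp
      moreover have "openin X {z \<in> topspace X. p z \<in> U}"
        using cp Uo by (simp add: continuous_map_def)
      ultimately obtain N V where NV: "openin X N" "compactin X V" "closedin X V"
        "f x0 \<in> N" "N \<subseteq> V" "V \<subseteq> {z \<in> topspace X. p z \<in> U}"
        using nb unfolding neighbourhood_base_of by meson
      define H where "H = X closure_of N"
      have HV: "H \<subseteq> V" unfolding H_def using NV closure_of_minimal by blast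
      have Hc: "compactin X H" unfolding H_def using NV HV H_def closed_compactin by fastforce
      have NH: "N \<subseteq> X interior_of H"
        unfolding H_def using NV by (meson closure_of_subset interior_of_maximal openin_subset)
      have "X closure_of (X interior_of H) = H"
      proof
        show "X closure_of (X interior_of H) \<subseteq> H"
          unfolding H_def by (metis closedin_closure_of closure_of_minimal interior_of_subset)
        show "H \<subseteq> X closure_of (X interior_of H)" unfolding H_def using NH closure_of_mono
          by (metis H_def)
      qed
      hence Hr: "compact_regular_closed_in X H"
        using Hc unfolding compact_regular_closed_in_def regular_closed_in_def by blast
      have pH: "p ` H \<subseteq> U" using HV NV by auto
      have "x0 \<in> {x \<in> topspace X'. f x \<in> X interior_of H}" using x0 NV NH by auto
      hence "x0 \<in> X' closure_of {x \<in> topspace X'. f x \<in> X interior_of H}"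
        using closure_of_subset by (metis (no_types, lifting) mem_Collect_eq subsetD subsetI)
      thus "y \<in> ?R" using Hr pH x0 by blast
    qed
    show "?R \<subseteq> ?L"
    proof
      fix y assume "y \<in> ?R"
      then obtain H x where H: "compact_regular_closed_in X H" "p ` H \<subseteq> U"
        and x: "x \<in> X' closure_of {x \<in> topspace X'. f x \<in> X interior_of H}" and yx: "y = p' x"
        by blast
      have xt: "x \<in> topspace X'" using x closure_of_subset_topspace by fast
      have Hcl: "X closure_of (X interior_of H) = H"
        using H unfolding compact_regular_closed_in_def regular_closed_in_def by blast
      have "f x \<in> X closure_of (f ` {x \<in> topspace X'. f x \<in> X interior_of H})"
        using continuous_map_image_closure_subset[OF assms(7)] x by blast
      also have "\<dots> \<subseteq> X closure_of (X interior_of H)" by (rule closure_of_mono) blast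
      finally have "f x \<in> H" using Hcl by simp
      hence "g (p' x) \<in> U" using H assms(11) xt by auto
      moreover have "p' x \<in> topspace Y'" using cp' xt by (meson continuous_map_def funcset_mem)
      ultimately show "y \<in> ?L" using yx by simp
    qed
  qed
  thus ?thesis unfolding U_def by simp
qed

end
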